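(* Let $G$ be a connected graph on $n$ nodes with degree vector $\mathbf d=(d_1,\dots,d_n)^T$, Laplacian $L$ and average degree $\bar d=\frac1n\sum_i d_i$. Suppose there exist a vector $\beta\in\mathbb R^n$ and a constant $C$ such that, componentwise, $$\mathbf d\;\le\;\frac{1}{2\log2}L\beta+\frac{C\bar d}{\log 2}\mathbf 1 .$$ Then there exists $k\in\{1,\dots,n\}$ and a constant $c_C$ depending only on $C$ such that, for the averaging process started at $v(0)=e_k$ (the $k$-th standard basis vector), for every $\epsilon<1$, $$\mathbb E\|v(t)-\bar v\|_1\ge\epsilon\quad\text{whenever}\quad t\le\frac{(1-\epsilon)\,n\log n}{2C}-c_C\,n .$$
   Context: Let $G=(V,E)$ be a finite, undirected graph with $V=\{1,\dots,n\}$. The averaging process on $G$: the state vector $v(t)\in\mathbb R^n$, $t=0,1,2,\dots$, starts from a given $v(0)$; at each step $t\ge 1$ an edge $\{i,j\}\in E$ is chosen uniformly at random (independently of all previous choices) and both $v_i$ and $v_j$ are replaced by $(v_i+v_j)/2$, all other coordinates unchanged. Let $\bar v=(a,\dots,a)^T$ with $a=\frac1n\sum_i v_i(0)$. $L=D-A$ is the graph Laplacian and $\mathbf 1$ the all-ones vector. Logarithms are natural. *)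

theory Defs
  imports Main Complex_Main
begin

text \<open>Graphs on vertex set {0..<n}; edges are two-element sets of vertices.
  Vectors in R^n are functions nat => real, only the values at i < n matter.\<close>

definition simple_graph :: "nat \<Rightarrow> nat set set \<Rightarrow> bool" where
  "simple_graph n E \<longleftrightarrow> (\<forall>e\<in>E. \<exists>i j. i < n \<and> j < n \<and> i \<noteq> j \<and> e = {i, j})"

definition adj :: "nat set set \<Rightarrow> nat \<Rightarrow> nat \<Rightarrow> bool" where
  "adj E i j \<longleftrightarrow> i \<noteq> j \<and> {i, j} \<in> E"

definition graph_connected :: "nat \<Rightarrow> nat set set \<Rightarrow> bool" where
  "graph_connected n E \<longleftrightarrow> (\<forall>i<n. \<forall>j<n. (i, j) \<in> {(x, y). adj E x y}\<^sup>*)"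

definition degree :: "nat set set \<Rightarrow> nat \<Rightarrow> nat" where
  "degree E i = card {e \<in> E. i \<in> e}"

definition avg_degree :: "nat \<Rightarrow> nat set set \<Rightarrow> real" where
  "avg_degree n E = (\<Sum>i<n. real (degree E i)) / real n"

definition laplacian_mult :: "nat \<Rightarrow> nat set set \<Rightarrow> (nat \<Rightarrow> real) \<Rightarrow> nat \<Rightarrow> real" where
  "laplacian_mult n E \<beta> i = real (degree E i) * \<beta> i - (\<Sum>j\<in>{j. j < n \<and> adj E i j}. \<beta> j)"

definition avg_step :: "nat set \<Rightarrow> (nat \<Rightarrow> real) \<Rightarrow> (nat \<Rightarrow> real)" where
  "avg_step e v = (\<lambda>k. if k \<in> e then (\<Sum>j\<in>e. v j) / 2 else v k)"

fun run_avg :: "(nat \<Rightarrow> real) \<Rightarrow> nat set list \<Rightarrow> (nat \<Rightarrow> real)" where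
  "run_avg v [] = v"
| "run_avg v (e # es) = run_avg (avg_step e v) es"

definition mean_val :: "nat \<Rightarrow> (nat \<Rightarrow> real) \<Rightarrow> real" where
  "mean_val n v = (\<Sum>i<n. v i) / real n"

definition l1_dev :: "nat \<Rightarrow> (nat \<Rightarrow> real) \<Rightarrow> (nat \<Rightarrow> real) \<Rightarrow> real" where
  "l1_dev n v0 v = (\<Sum>i<n. \<bar>v i - mean_val n v0\<bar>)"

text \<open>E ||v(t) - vbar||_1 : edges chosen i.i.d. uniformly from E, so every edge sequence of
  length t has probability 1/|E|^t.\<close>
definition expected_l1_dev :: "nat \<Rightarrow> nat set set \<Rightarrow> (nat \<Rightarrow> real) \<Rightarrow> nat \<Rightarrow> real" where
  "expected_l1_dev n E v0 t =
     (\<Sum>es\<in>{es. set es \<subseteq> E \<and> length es = t}. l1_dev n v0 (run_avg v0 es)) / real (card E) ^ t"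

definition basis_vec :: "nat \<Rightarrow> nat \<Rightarrow> real" where
  "basis_vec k = (\<lambda>i. if i = k then 1 else 0)"

end

theory Submission imports Defs begin

definition psi :: "nat \<Rightarrow> (nat \<Rightarrow> real) \<Rightarrow> (nat \<Rightarrow> real) \<Rightarrow> real" where
  "psi n \<beta> v = (\<Sum>k<n. \<beta> k * v k - v k * ln (v k))"

definition pvec :: "nat \<Rightarrow> (nat \<Rightarrow> real) \<Rightarrow> bool" where
  "pvec n v \<longleftrightarrow> (\<forall>i<n. 0 \<le> v i) \<and> (\<Sum>i<n. v i) = 1"

lemma sum_step:
  fixes g :: "nat \<Rightarrow> real \<Rightarrow> real"
  assumes "i < n" "j < n" "i \<noteq> j"
  shows "(\<Sum>k<n. g k (avg_step {i,j} v k)) = (\<Sum>k<n. g k (v k))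
     + (g i ((v i + v j)/2) - g i (v i)) + (g j ((v i + v j)/2) - g j (v j))"
proof -
  have "(\<Sum>k<n. g k (avg_step {i,j} v k) - g k (v k)) = (\<Sum>k\<in>{i,j}. g k (avg_step {i,j} v k) - g k (v k))"
  proof (rule sum.mono_neutral_right)
    show "\<forall>k\<in>{..<n} - {i, j}. g k (avg_step {i, j} v k) - g k (v k) = 0"
    proof
      fix k assume "k \<in> {..<n} - {i, j}"
      then have "avg_step {i,j} v k = v k" by (simp add: avg_step_def)
      then show "g k (avg_step {i, j} v k) - g k (v k) = 0" by simp
    qed
  qed (use assms in auto)
  also have "\<dots> = (g i ((v i + v j)/2) - g i (v i)) + (g j ((v i + v j)/2) - g j (v j))"
    using assms by (simp add: avg_step_def)
  finally show ?thesis by (simp add: sum_subtractf)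
qed

lemma pvec_step:
  assumes "pvec n v" "i < n" "j < n" "i \<noteq> j"
  shows "pvec n (avg_step {i,j} v)"
proof -
  have "(\<Sum>k<n. (\<lambda>k x. x) k (avg_step {i,j} v k)) = (\<Sum>k<n. (\<lambda>k x. x) k (v k))
     + ((\<lambda>k x. x) i ((v i + v j)/2) - (\<lambda>k x. x) i (v i)) + ((\<lambda>k x. x) j ((v i + v j)/2) - (\<lambda>k x. x) j (v j))"
    by (rule sum_step[OF assms(2-4)])
  then have "(\<Sum>k<n. avg_step {i,j} v k) = 1" using assms(1) by (simp add: pvec_def field_simps)
  moreover have "\<forall>k<n. 0 \<le> avg_step {i,j} v k" using assms by (auto simp: pvec_def avg_step_def)
  ultimately show ?thesis by (simp add: pvec_def)
qed

lemma edge_cases: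
  assumes "simple_graph n E" "e \<in> E"
  obtains i j where "i < n" "j < n" "i \<noteq> j" "e = {i,j}"
  using assms unfolding simple_graph_def by blast

lemma pvec_run:
  assumes "simple_graph n E" "pvec n v" "set es \<subseteq> E"
  shows "pvec n (run_avg v es)"
  using assms(2,3)
proof (induction es arbitrary: v)
  case Nil then show ?case by simp
next
  case (Cons e es)
  from Cons.prems obtain i j where "i < n" "j < n" "i \<noteq> j" "e = {i,j}"
    using edge_cases[OF assms(1)] by auto
  then have "pvec n (avg_step e v)" using pvec_step Cons.prems by blast
  then show ?case using Cons by simp
qed

lemma finite_E: "simple_graph n E \<Longrightarrow> finite E"
  by (rule finite_subset[of _ "Pow {..<n}"]) (auto simp: simple_graph_def)

lemma swap_edges:
  assumes "simple_graph n E"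
  shows "(\<Sum>e\<in>E. \<Sum>x\<in>e. F e x) = (\<Sum>x<n. \<Sum>e\<in>{e\<in>E. x\<in>e}. F e x)"
proof -
  have fin: "finite E" using finite_E[OF assms] .
  have sub: "\<And>e. e \<in> E \<Longrightarrow> e \<subseteq> {..<n}" using assms by (auto simp: simple_graph_def)
  have "(\<Sum>e\<in>E. \<Sum>x\<in>e. F e x) = (\<Sum>e\<in>E. \<Sum>x<n. if x \<in> e then F e x else 0)"
  proof (rule sum.cong[OF refl])
    fix e assume "e \<in> E"
    then have "(\<Sum>x<n. if x \<in> e then F e x else 0) = (\<Sum>x\<in>e. if x \<in> e then F e x else 0)"
      using sub by (intro sum.mono_neutral_right) auto
    then show "(\<Sum>x\<in>e. F e x) = (\<Sum>x<n. if x \<in> e then F e x else 0)" by simp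
  qed
  also have "\<dots> = (\<Sum>x<n. \<Sum>e\<in>E. if x \<in> e then F e x else 0)" by (rule sum.swap)
  also have "\<dots> = (\<Sum>x<n. \<Sum>e\<in>{e\<in>E. x\<in>e}. F e x)"
    using fin by (simp add: sum.inter_filter)
  finally show ?thesis .
qed

lemma degree_sum:
  fixes f :: "nat \<Rightarrow> real"
  assumes "simple_graph n E"
  shows "(\<Sum>e\<in>E. \<Sum>x\<in>e. f x) = (\<Sum>x<n. real (degree E x) * f x)"
  by (simp add: swap_edges[OF assms] degree_def)

lemma handshake:
  assumes "simple_graph n E"
  shows "(\<Sum>x<n. real (degree E x)) = 2 * real (card E)"
proof -
  have "(\<Sum>x<n. real (degree E x)) = (\<Sum>x<n. real (degree E x) * 1)" by simp
  also have "\<dots> = (\<Sum>e\<in>E. \<Sum>x\<in>e. (1::real))" by (rule degree_sum[OF assms, symmetric])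
  also have "\<dots> = (\<Sum>e\<in>E. 2)"
  proof (rule sum.cong[OF refl])
    fix e assume "e \<in> E"
    then obtain i j where "i \<noteq> j" "e = {i,j}" using edge_cases[OF assms] by metis
    then show "(\<Sum>x\<in>e. (1::real)) = 2" by simp
  qed
  finally show ?thesis by simp
qed

lemma adj_sum:
  fixes v \<beta> :: "nat \<Rightarrow> real"
  assumes "simple_graph n E"
  shows "(\<Sum>e\<in>E. \<Sum>x\<in>e. v x * (\<Sum>y\<in>e-{x}. \<beta> y)) = (\<Sum>x<n. v x * (\<Sum>y\<in>{y. y < n \<and> adj E x y}. \<beta> y))"
proof -
  have "(\<Sum>e\<in>E. \<Sum>x\<in>e. v x * (\<Sum>y\<in>e-{x}. \<beta> y)) = (\<Sum>x<n. \<Sum>e\<in>{e\<in>E. x\<in>e}. v x * (\<Sum>y\<in>e-{x}. \<beta> y))"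
    by (rule swap_edges[OF assms])
  also have "\<dots> = (\<Sum>x<n. v x * (\<Sum>y\<in>{y. y < n \<and> adj E x y}. \<beta> y))"
  proof (rule sum.cong[OF refl])
    fix x assume x: "x \<in> {..<n}"
    have img: "{e\<in>E. x\<in>e} = (\<lambda>y. {x,y}) ` {y. y < n \<and> adj E x y}"
    proof
      show "{e\<in>E. x\<in>e} \<subseteq> (\<lambda>y. {x,y}) ` {y. y < n \<and> adj E x y}"
      proof
        fix e assume "e \<in> {e\<in>E. x\<in>e}"
        then have "e \<in> E" "x \<in> e" by auto
        then obtain i j where ij: "i < n" "j < n" "i \<noteq> j" "e = {i,j}" using edge_cases[OF assms] by metis
        show "e \<in> (\<lambda>y. {x,y}) ` {y. y < n \<and> adj E x y}"
        proof (cases "x = i")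
          case True
          then show ?thesis using ij \<open>e \<in> E\<close> by (auto simp: adj_def)
        next
          case False
          then have "x = j" using ij \<open>x \<in> e\<close> by auto
          then show ?thesis using ij \<open>e \<in> E\<close> by (auto simp: adj_def insert_commute intro!: image_eqI[where x=i])
        qed
      qed
    qed (auto simp: adj_def)
    have inj: "inj_on (\<lambda>y. {x,y}) {y. y < n \<and> adj E x y}"
      by (auto simp: inj_on_def doubleton_eq_iff adj_def)
    have "(\<Sum>e\<in>{e\<in>E. x\<in>e}. v x * (\<Sum>y\<in>e-{x}. \<beta> y)) = (\<Sum>y\<in>{y. y < n \<and> adj E x y}. v x * (\<Sum>z\<in>{x,y}-{x}. \<beta> z))"
      unfolding img by (rule sum.reindex[OF inj, unfolded comp_def])
    also have "\<dots> = (\<Sum>y\<in>{y. y < n \<and> adj E x y}. v x * \<beta> y)"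
      by (rule sum.cong[OF refl]) (auto simp: adj_def)
    also have "\<dots> = v x * (\<Sum>y\<in>{y. y < n \<and> adj E x y}. \<beta> y)"
      by (rule sum_distrib_left[symmetric])
    finally show "(\<Sum>e\<in>{e\<in>E. x\<in>e}. v x * (\<Sum>y\<in>e-{x}. \<beta> y)) = v x * (\<Sum>y\<in>{y. y < n \<and> adj E x y}. \<beta> y)" .
  qed
  finally show ?thesis .
qed


lemma xlnx_le: "0 \<le> a \<Longrightarrow> a \<le> s \<Longrightarrow> a * ln a \<le> a * ln (s::real)"
  by (cases "a = 0") (auto intro!: mult_left_mono)

lemma ent_ineq:
  fixes a b :: real
  assumes "0 \<le> a" "0 \<le> b"
  shows "a * ln a + b * ln b \<le> 2 * ((a+b)/2) * ln ((a+b)/2) + ln 2 * (a+b)"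
proof (cases "a + b = 0")
  case True then have "a = 0" "b = 0" using assms by auto
  then show ?thesis by simp
next
  case False
  then have s: "a + b > 0" using assms by auto
  have "a * ln a + b * ln b \<le> a * ln (a+b) + b * ln (a+b)"
    using xlnx_le[of a "a+b"] xlnx_le[of b "a+b"] assms by auto
  also have "\<dots> = (a+b) * ln (a+b)" by (simp add: algebra_simps)
  also have "\<dots> = 2 * ((a+b)/2) * ln ((a+b)/2) + ln 2 * (a+b)"
  proof -
    have h: "ln (a+b) = ln ((a+b)/2) + ln 2" using s by (simp add: ln_div)
    show ?thesis unfolding h by (simp add: algebra_simps)
  qed
  finally show ?thesis .
qed

lemma edge_bound:
  fixes v \<beta> :: "nat \<Rightarrow> real"
  assumes "i < n" "j < n" "i \<noteq> j" "0 \<le> v i" "0 \<le> v j"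
  shows "psi n \<beta> (avg_step {i,j} v) \<le> psi n \<beta> v + (\<Sum>x\<in>{i,j}. (ln 2 - \<beta> x/2) * v x)
     + (1/2) * (\<Sum>x\<in>{i,j}. v x * (\<Sum>y\<in>{i,j}-{x}. \<beta> y))"
proof -
  define a where "a = (v i + v j)/2"
  have "psi n \<beta> (avg_step {i,j} v) = psi n \<beta> v
     + ((\<beta> i * a - a * ln a) - (\<beta> i * v i - v i * ln (v i)))
     + ((\<beta> j * a - a * ln a) - (\<beta> j * v j - v j * ln (v j)))"
    unfolding psi_def a_def by (rule sum_step[OF assms(1-3), where g="\<lambda>k x. \<beta> k * x - x * ln x"])
  moreover have "v i * ln (v i) + v j * ln (v j) \<le> 2 * (a * ln a) + ln 2 * v i + ln 2 * v j"
    using ent_ineq[OF assms(4,5)] unfolding a_def by (simp add: algebra_simps)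
  moreover have "(\<Sum>x\<in>{i,j}. (ln 2 - \<beta> x/2) * v x) = ln 2 * v i - \<beta> i * v i / 2 + ln 2 * v j - \<beta> j * v j / 2"
    using assms by (simp add: algebra_simps)
  moreover have "(\<Sum>x\<in>{i,j}. v x * (\<Sum>y\<in>{i,j}-{x}. \<beta> y)) = \<beta> j * v i + \<beta> i * v j"
    using assms by (simp add: insert_Diff_if algebra_simps)
  moreover have "\<beta> i * a = \<beta> i * v i / 2 + \<beta> i * v j / 2" "\<beta> j * a = \<beta> j * v i / 2 + \<beta> j * v j / 2"
    unfolding a_def by (simp_all add: algebra_simps)
  ultimately show ?thesis by linarith
qed

lemma one_step:
  fixes v \<beta> :: "nat \<Rightarrow> real"
  assumes G: "simple_graph n E" and pv: "pvec n v"
    and hyp: "\<forall>i<n. real (degree E i) \<le> laplacian_mult n E \<beta> i / (2 * ln 2) + C * avg_degree n E / ln 2"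
  shows "(\<Sum>e\<in>E. psi n \<beta> (avg_step e v)) \<le> real (card E) * psi n \<beta> v + C * avg_degree n E"
proof -
  have fin: "finite E" using finite_E[OF G] .
  have "(\<Sum>e\<in>E. psi n \<beta> (avg_step e v)) \<le> (\<Sum>e\<in>E. psi n \<beta> v + (\<Sum>x\<in>e. (ln 2 - \<beta> x/2) * v x)
     + (1/2) * (\<Sum>x\<in>e. v x * (\<Sum>y\<in>e-{x}. \<beta> y)))"
  proof (rule sum_mono)
    fix e assume "e \<in> E"
    then obtain i j where "i < n" "j < n" "i \<noteq> j" "e = {i,j}" using edge_cases[OF G] by metis
    then show "psi n \<beta> (avg_step e v) \<le> psi n \<beta> v + (\<Sum>x\<in>e. (ln 2 - \<beta> x/2) * v x)
     + (1/2) * (\<Sum>x\<in>e. v x * (\<Sum>y\<in>e-{x}. \<beta> y))"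
      using edge_bound pv by (auto simp: pvec_def)
  qed
  also have "\<dots> = real (card E) * psi n \<beta> v + (\<Sum>x<n. real (degree E x) * ((ln 2 - \<beta> x/2) * v x))
     + (1/2) * (\<Sum>x<n. v x * (\<Sum>y\<in>{y. y < n \<and> adj E x y}. \<beta> y))"
  proof -
    have "(\<Sum>e\<in>E. (1/2) * (\<Sum>x\<in>e. v x * (\<Sum>y\<in>e-{x}. \<beta> y))) = (1/2) * (\<Sum>e\<in>E. (\<Sum>x\<in>e. v x * (\<Sum>y\<in>e-{x}. \<beta> y)))"
      by (rule sum_distrib_left[symmetric])
    also have "\<dots> = (1/2) * (\<Sum>x<n. v x * (\<Sum>y\<in>{y. y < n \<and> adj E x y}. \<beta> y))"
      by (simp only: adj_sum[OF G])
    finally have A: "(\<Sum>e\<in>E. (1/2) * (\<Sum>x\<in>e. v x * (\<Sum>y\<in>e-{x}. \<beta> y))) = (1/2) * (\<Sum>x<n. v x * (\<Sum>y\<in>{y. y < n \<and> adj E x y}. \<beta> y))" .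
    have B: "(\<Sum>e\<in>E. (\<Sum>x\<in>e. (ln 2 - \<beta> x/2) * v x)) = (\<Sum>x<n. real (degree E x) * ((ln 2 - \<beta> x/2) * v x))"
      by (rule degree_sum[OF G])
    show ?thesis by (simp only: sum.distrib A B) simp
  qed
  also have "\<dots> = real (card E) * psi n \<beta> v + (\<Sum>x<n. v x * (ln 2 * real (degree E x) - laplacian_mult n E \<beta> x / 2))"
  proof -
    have "(1/2) * (\<Sum>x<n. v x * (\<Sum>y\<in>{y. y < n \<and> adj E x y}. \<beta> y)) = (\<Sum>x<n. (1/2) * (v x * (\<Sum>y\<in>{y. y < n \<and> adj E x y}. \<beta> y)))"
      by (rule sum_distrib_left)
    moreover have "(\<Sum>x<n. real (degree E x) * ((ln 2 - \<beta> x/2) * v x)) + (\<Sum>x<n. (1/2) * (v x * (\<Sum>y\<in>{y. y < n \<and> adj E x y}. \<beta> y)))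
       = (\<Sum>x<n. v x * (ln 2 * real (degree E x) - laplacian_mult n E \<beta> x / 2))"
      unfolding sum.distrib[symmetric]
    proof (rule sum.cong[OF refl])
      fix x
      define S where "S = (\<Sum>y\<in>{y. y < n \<and> adj E x y}. \<beta> y)"
      have eq: "laplacian_mult n E \<beta> x = real (degree E x) * \<beta> x - S"
        by (simp add: laplacian_mult_def S_def)
      show "real (degree E x) * ((ln 2 - \<beta> x/2) * v x) + (1/2) * (v x * (\<Sum>y\<in>{y. y < n \<and> adj E x y}. \<beta> y))
        = v x * (ln 2 * real (degree E x) - laplacian_mult n E \<beta> x / 2)"
        unfolding S_def[symmetric] eq by (simp add: field_simps)
    qed
    ultimately show ?thesis by simp
  qed
  also have "\<dots> \<le> real (card E) * psi n \<beta> v + (\<Sum>x<n. v x * (C * avg_degree n E))"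
  proof -
    have "(\<Sum>x<n. v x * (ln 2 * real (degree E x) - laplacian_mult n E \<beta> x / 2)) \<le> (\<Sum>x<n. v x * (C * avg_degree n E))"
    proof (rule sum_mono)
      fix x assume x: "x \<in> {..<n}"
      have l2: "ln (2::real) > 0" by simp
      have "real (degree E x) \<le> laplacian_mult n E \<beta> x / (2 * ln 2) + C * avg_degree n E / ln 2"
        using hyp x by auto
      then have "ln 2 * real (degree E x) \<le> ln 2 * (laplacian_mult n E \<beta> x / (2 * ln 2) + C * avg_degree n E / ln 2)"
        using l2 by (simp add: mult_left_mono)
      also have "\<dots> = laplacian_mult n E \<beta> x / 2 + C * avg_degree n E"
        using l2 by (simp add: field_simps)
      finally have "ln 2 * real (degree E x) - laplacian_mult n E \<beta> x / 2 \<le> C * avg_degree n E" by simp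
      then show "v x * (ln 2 * real (degree E x) - laplacian_mult n E \<beta> x / 2) \<le> v x * (C * avg_degree n E)"
        using pv x by (auto simp: pvec_def intro: mult_left_mono)
    qed
    then show ?thesis by simp
  qed
  also have "\<dots> = real (card E) * psi n \<beta> v + C * avg_degree n E"
    using pv by (simp add: sum_distrib_right[symmetric] pvec_def)
  finally show ?thesis .
qed


lemma pt_bound:
  fixes N x :: real
  assumes N: "1 \<le> N" and x0: "0 \<le> x" and x1: "x \<le> 1"
  shows "ln N * (x + 1/N) + 2*(x*ln x) - 2*x \<le> ln N * \<bar>x - 1/N\<bar>"
proof (cases "x \<le> 1/N")
  case True
  have "x * ln x + x * ln N \<le> x"
  proof (cases "x = 0")
    case False
    then have xp: "x > 0" using x0 by auto
    have "x * N \<le> 1" using True N by (simp add: field_simps)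
    then have "ln (x * N) \<le> 0" using xp N by simp
    then have "ln x + ln N \<le> 0" using xp N by (simp add: ln_mult)
    then have "x * (ln x + ln N) \<le> 0" using xp by (simp add: mult_nonneg_nonpos)
    then show ?thesis using xp by (simp add: algebra_simps)
  qed simp
  moreover have "\<bar>x - 1/N\<bar> = 1/N - x" using True by simp
  ultimately show ?thesis by (simp add: algebra_simps)
next
  case False
  then have xg: "x > 1/N" by simp
  have Np: "N > 0" using N by simp
  have xp: "x > 0" using xg Np by (meson less_trans zero_less_divide_1_iff)
  have Nx: "N * x > 0" using Np xp by simp
  have lnx: "ln x = ln (N*x) - ln N" using Np xp by (simp add: ln_mult)
  have a1: "ln (N*x) \<le> ln N" using Np xp x1 Nx by (simp add: mult_left_le)
  have a2: "ln (N*x) \<le> N*x - 1" using ln_le_minus_one Nx by blast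
  have "(x - 1/N) * ln (N*x) \<le> (x - 1/N) * ln N" using xg a1 by (intro mult_left_mono) auto
  then have "x * ln x + ln N / N \<le> (1/N) * ln (N*x)" unfolding lnx by (simp add: algebra_simps)
  also have "\<dots> \<le> (1/N) * (N*x - 1)" using a2 Np by (intro mult_left_mono) auto
  also have "\<dots> \<le> x" using Np by (simp add: field_simps)
  finally have "x * ln x + ln N / N \<le> x" .
  moreover have "\<bar>x - 1/N\<bar> = x - 1/N" using xg by simp
  moreover have "ln N * (x + 1/N) = ln N * (x - 1/N) + 2*(ln N / N)" by (simp add: algebra_simps)
  ultimately show ?thesis by linarith
qed

lemma sum_Suc_lists:
  assumes "finite E"
  shows "(\<Sum>es\<in>{es. set es \<subseteq> E \<and> length es = Suc t}. f (run_avg v es)) =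
         (\<Sum>e\<in>E. \<Sum>es\<in>{es. set es \<subseteq> E \<and> length es = t}. f (run_avg (avg_step e v) es))"
proof -
  let ?S = "{es. set es \<subseteq> E \<and> length es = t}"
  have inj: "inj_on (\<lambda>(xs, n). n#xs) (?S \<times> E)" by (auto simp: inj_on_def)
  have "(\<Sum>es\<in>{es. set es \<subseteq> E \<and> length es = Suc t}. f (run_avg v es)) =
        (\<Sum>p\<in>?S \<times> E. f (run_avg v ((\<lambda>(xs, n). n#xs) p)))"
    unfolding lists_length_Suc_eq by (rule sum.reindex[OF inj, unfolded comp_def])
  also have "\<dots> = (\<Sum>es\<in>?S. \<Sum>e\<in>E. f (run_avg v (e#es)))"
    unfolding sum.cartesian_product by (rule sum.cong) auto
  also have "\<dots> = (\<Sum>e\<in>E. \<Sum>es\<in>?S. f (run_avg v (e#es)))" by (rule sum.swap)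
  finally show ?thesis by simp
qed

lemma psi_bound:
  fixes v \<beta> :: "nat \<Rightarrow> real"
  assumes G: "simple_graph n E" and mpos: "card E > 0"
    and hyp: "\<forall>i<n. real (degree E i) \<le> laplacian_mult n E \<beta> i / (2 * ln 2) + C * avg_degree n E / ln 2"
  shows "pvec n v \<Longrightarrow> (\<Sum>es\<in>{es. set es \<subseteq> E \<and> length es = t}. psi n \<beta> (run_avg v es))
          \<le> real (card E) ^ t * (psi n \<beta> v + real t * (C * avg_degree n E / real (card E)))"
proof (induction t arbitrary: v)
  case 0
  have "{es. set es \<subseteq> E \<and> length es = 0} = {[]}" by auto
  then show ?case by simp
next
  case (Suc t)
  let ?m = "real (card E)"
  let ?D = "C * avg_degree n E / ?m"
  have fin: "finite E" using finite_E[OF G] .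
  have mp: "?m > 0" using mpos by simp
  have "(\<Sum>es\<in>{es. set es \<subseteq> E \<and> length es = Suc t}. psi n \<beta> (run_avg v es))
      = (\<Sum>e\<in>E. \<Sum>es\<in>{es. set es \<subseteq> E \<and> length es = t}. psi n \<beta> (run_avg (avg_step e v) es))"
    by (rule sum_Suc_lists[OF fin])
  also have "\<dots> \<le> (\<Sum>e\<in>E. ?m ^ t * (psi n \<beta> (avg_step e v) + real t * ?D))"
  proof (rule sum_mono)
    fix e assume "e \<in> E"
    then obtain i j where "i < n" "j < n" "i \<noteq> j" "e = {i,j}" using edge_cases[OF G] by metis
    then have "pvec n (avg_step e v)" using pvec_step Suc.prems by blast
    then show "(\<Sum>es\<in>{es. set es \<subseteq> E \<and> length es = t}. psi n \<beta> (run_avg (avg_step e v) es))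
       \<le> ?m ^ t * (psi n \<beta> (avg_step e v) + real t * ?D)" by (rule Suc.IH)
  qed
  also have "\<dots> = ?m ^ t * ((\<Sum>e\<in>E. psi n \<beta> (avg_step e v)) + ?m * (real t * ?D))"
    by (simp add: sum_distrib_left[symmetric] sum.distrib)
  also have "\<dots> \<le> ?m ^ t * ((?m * psi n \<beta> v + C * avg_degree n E) + ?m * (real t * ?D))"
    using one_step[OF G Suc.prems hyp] by (intro mult_left_mono) auto
  also have "\<dots> = ?m ^ Suc t * (psi n \<beta> v + real (Suc t) * ?D)"
    using mp by (simp add: field_simps)
  finally show ?case .
qed


lemma lower_l1:
  fixes w \<beta> v0 :: "nat \<Rightarrow> real"
  assumes n2: "2 \<le> n" and pw: "pvec n w" and k: "k < n" and kmin: "\<forall>i<n. \<beta> k \<le> \<beta> i"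
    and mv: "mean_val n v0 = 1 / real n"
  shows "2 * ln (real n) - 2 + 2 * \<beta> k - 2 * psi n \<beta> w \<le> ln (real n) * l1_dev n v0 w"
proof -
  have w0: "\<And>i. i < n \<Longrightarrow> 0 \<le> w i" using pw by (simp add: pvec_def)
  have ws: "(\<Sum>i<n. w i) = 1" using pw by (simp add: pvec_def)
  have w1: "\<And>i. i < n \<Longrightarrow> w i \<le> 1"
  proof -
    fix i assume i: "i < n"
    have "w i \<le> (\<Sum>j<n. w j)"
      using i w0 by (intro member_le_sum) auto
    then show "w i \<le> 1" using ws by simp
  qed
  have N: "1 \<le> real n" using n2 by simp
  have "(\<Sum>i<n. ln (real n) * (w i + 1/real n) + 2*(w i*ln (w i)) - 2*w i) \<le> (\<Sum>i<n. ln (real n) * \<bar>w i - 1/real n\<bar>)"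
    using pt_bound[OF N] w0 w1 by (intro sum_mono) auto
  moreover have "(\<Sum>i<n. ln (real n) * (w i + 1/real n) + 2*(w i*ln (w i)) - 2*w i)
     = ln (real n) * ((\<Sum>i<n. w i) + 1) + 2*(\<Sum>i<n. w i*ln (w i)) - 2*(\<Sum>i<n. w i)"
    using n2 by (simp add: sum.distrib sum_subtractf sum_distrib_left distrib_left)
  moreover have "(\<Sum>i<n. ln (real n) * \<bar>w i - 1/real n\<bar>) = ln (real n) * l1_dev n v0 w"
    unfolding l1_dev_def mv by (simp add: sum_distrib_left)
  moreover have "psi n \<beta> w = (\<Sum>i<n. \<beta> i * w i) - (\<Sum>i<n. w i*ln (w i))"
    unfolding psi_def by (simp add: sum_subtractf)
  moreover have "\<beta> k \<le> (\<Sum>i<n. \<beta> i * w i)"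
  proof -
    have "(\<Sum>i<n. \<beta> k * w i) \<le> (\<Sum>i<n. \<beta> i * w i)"
      using kmin w0 by (intro sum_mono mult_right_mono) auto
    then show ?thesis using ws by (simp add: sum_distrib_left[symmetric])
  qed
  moreover have "ln (real n) * ((\<Sum>i<n. w i) + 1) = 2 * ln (real n)" using ws by simp
  ultimately show ?thesis using ws by linarith
qed


lemma E_nonempty:
  assumes "graph_connected n E" "2 \<le> n"
  shows "E \<noteq> {}"
proof
  assume "E = {}"
  then have "{(x, y). adj E x y} = {}" by (auto simp: adj_def)
  moreover have "(0, 1) \<in> {(x, y). adj E x y}\<^sup>*" using assms unfolding graph_connected_def by auto
  ultimately show False by simp
qed

theorem theorem5:
  fixes C :: real
  shows "\<exists>cC :: real. \<forall>(n::nat) (E::nat set set) (\<beta>::nat \<Rightarrow> real).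
     simple_graph n E \<and> graph_connected n E \<and> 2 \<le> n \<and>
     (\<forall>i<n. real (degree E i) \<le> laplacian_mult n E \<beta> i / (2 * ln 2) + C * avg_degree n E / ln 2)
     \<longrightarrow> (\<exists>k<n. \<forall>(\<epsilon>::real) (t::nat). \<epsilon> < 1 \<and>
            real t \<le> (1 - \<epsilon>) * real n * ln (real n) / (2 * C) - cC * real n
            \<longrightarrow> \<epsilon> \<le> expected_l1_dev n E (basis_vec k) t)"
proof -
  define cC where "cC = (if C > 0 then 1/(2*C) else 1)"
  show ?thesis
  proof (rule exI[of _ cC], intro allI impI)
    fix n E and \<beta> :: "nat \<Rightarrow> real"
    assume H: "simple_graph n E \<and> graph_connected n E \<and> 2 \<le> n \<and>
     (\<forall>i<n. real (degree E i) \<le> laplacian_mult n E \<beta> i / (2 * ln 2) + C * avg_degree n E / ln 2)"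
    then have G: "simple_graph n E" and conn: "graph_connected n E" and n2: "2 \<le> n"
      and hyp: "\<forall>i<n. real (degree E i) \<le> laplacian_mult n E \<beta> i / (2 * ln 2) + C * avg_degree n E / ln 2"
      by auto
    have fin: "finite E" using finite_E[OF G] .
    have mpos: "card E > 0" using E_nonempty[OF conn n2] fin by (simp add: card_gt_0_iff)
    have "Min (\<beta> ` {..<n}) \<in> \<beta> ` {..<n}" using n2 by (intro Min_in) (auto simp: lessThan_empty_iff)
    then obtain k where k: "k < n" and kdef: "\<beta> k = Min (\<beta> ` {..<n})" by auto
    have kmin: "\<forall>i<n. \<beta> k \<le> \<beta> i" unfolding kdef by (auto intro: Min_le)
    show "\<exists>k<n. \<forall>(\<epsilon>::real) (t::nat). \<epsilon> < 1 \<and>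
            real t \<le> (1 - \<epsilon>) * real n * ln (real n) / (2 * C) - cC * real n
            \<longrightarrow> \<epsilon> \<le> expected_l1_dev n E (basis_vec k) t"
    proof (intro exI[of _ k] conjI allI impI)
      show "k < n" by (rule k)
      fix \<epsilon> :: real and t :: nat
      assume A: "\<epsilon> < 1 \<and> real t \<le> (1 - \<epsilon>) * real n * ln (real n) / (2 * C) - cC * real n"
      have lnpos: "ln (real n) > 0" using n2 by simp
      let ?m = "real (card E)"
      let ?S = "{es. set es \<subseteq> E \<and> length es = t}"
      let ?v0 = "basis_vec k"
      have mp: "?m > 0" using mpos by simp
      have cardS: "card ?S = card E ^ t" by (rule card_lists_length_eq[OF fin])
      have finS: "finite ?S" using fin by (simp add: finite_lists_length_eq)
      show "\<epsilon> \<le> expected_l1_dev n E ?v0 t"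
      proof (cases "C > 0")
        case False
        then have c1: "cC = 1" by (simp add: cC_def)
        have "(1 - \<epsilon>) * real n * ln (real n) \<ge> 0" using A lnpos by simp
        then have "(1 - \<epsilon>) * real n * ln (real n) / (2 * C) \<le> 0"
          using False by (intro divide_nonneg_nonpos) auto
        then show ?thesis using A c1 n2 by simp
      next
        case Cpos: True
        have nonneg: "0 \<le> expected_l1_dev n E ?v0 t"
          unfolding expected_l1_dev_def l1_dev_def
          by (intro divide_nonneg_nonneg sum_nonneg) auto
        show ?thesis
        proof (cases "\<epsilon> \<le> 0")
          case True then show ?thesis using nonneg by simp
        next
          case False
          then have epos: "\<epsilon> > 0" by simp
          have pv0: "pvec n ?v0" using k by (simp add: pvec_def basis_vec_def)
          have psi0: "psi n \<beta> ?v0 = \<beta> k"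
          proof -
            have "psi n \<beta> ?v0 = (\<Sum>i<n. if i = k then \<beta> k else 0)"
              unfolding psi_def basis_vec_def by (rule sum.cong) auto
            then show ?thesis using k by simp
          qed
          have mv: "mean_val n ?v0 = 1 / real n" using k by (simp add: mean_val_def basis_vec_def)
          have avg: "avg_degree n E = 2 * ?m / real n"
            unfolding avg_degree_def handshake[OF G] ..
          define D where "D = C * avg_degree n E / ?m"
          have Dv: "D = 2 * C / real n" unfolding D_def avg using mp by simp
          have B1: "(\<Sum>es\<in>?S. psi n \<beta> (run_avg ?v0 es)) \<le> ?m ^ t * (\<beta> k + real t * D)"
            using psi_bound[OF G mpos hyp pv0, of t] unfolding psi0 D_def .
          have B2: "(\<Sum>es\<in>?S. 2 * ln (real n) - 2 + 2 * \<beta> k - 2 * psi n \<beta> (run_avg ?v0 es))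
                 \<le> (\<Sum>es\<in>?S. ln (real n) * l1_dev n ?v0 (run_avg ?v0 es))"
          proof (rule sum_mono)
            fix es assume "es \<in> ?S"
            then have "pvec n (run_avg ?v0 es)" using pvec_run[OF G pv0] by auto
            then show "2 * ln (real n) - 2 + 2 * \<beta> k - 2 * psi n \<beta> (run_avg ?v0 es)
                 \<le> ln (real n) * l1_dev n ?v0 (run_avg ?v0 es)"
              by (rule lower_l1[OF n2 _ k kmin mv])
          qed
          have B2': "(\<Sum>es\<in>?S. 2 * ln (real n) - 2 + 2 * \<beta> k - 2 * psi n \<beta> (run_avg ?v0 es))
             = ?m ^ t * (2 * ln (real n) - 2 + 2 * \<beta> k) - 2 * (\<Sum>es\<in>?S. psi n \<beta> (run_avg ?v0 es))"
            by (simp add: sum_subtractf sum_distrib_left[symmetric] cardS)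
          have B3: "(\<Sum>es\<in>?S. ln (real n) * l1_dev n ?v0 (run_avg ?v0 es)) = ln (real n) * (\<Sum>es\<in>?S. l1_dev n ?v0 (run_avg ?v0 es))"
            by (rule sum_distrib_left[symmetric])
          define L where "L = (\<Sum>es\<in>?S. l1_dev n ?v0 (run_avg ?v0 es))"
          have main: "?m ^ t * (2 * ln (real n) - 2 - 2 * real t * D) \<le> ln (real n) * L"
          proof -
            have "?m ^ t * (2 * ln (real n) - 2 - 2 * real t * D)
                = ?m ^ t * (2 * ln (real n) - 2 + 2 * \<beta> k) - 2 * (?m ^ t * (\<beta> k + real t * D))"
              by (simp add: algebra_simps)
            also have "\<dots> \<le> ?m ^ t * (2 * ln (real n) - 2 + 2 * \<beta> k) - 2 * (\<Sum>es\<in>?S. psi n \<beta> (run_avg ?v0 es))"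
              using B1 by simp
            also have "\<dots> \<le> ln (real n) * L" using B2 B2' B3 unfolding L_def by simp
            finally show ?thesis .
          qed
          have tD: "2 * real t * D \<le> 2 * (1 - \<epsilon>) * ln (real n) - 2"
          proof -
            have c: "cC = 1/(2*C)" using Cpos by (simp add: cC_def)
            have np: "real n > 0" using n2 by simp
            have "real t * (4 * C / real n) \<le> ((1 - \<epsilon>) * real n * ln (real n) / (2 * C) - cC * real n) * (4 * C / real n)"
              using A Cpos np by (intro mult_right_mono) auto
            also have "\<dots> = 2 * (1 - \<epsilon>) * ln (real n) - 2"
              unfolding c using Cpos np by (simp add: field_simps)
            finally show ?thesis unfolding Dv by (simp add: field_simps)
          qed
          have "\<epsilon> * ln (real n) \<le> 2 * ln (real n) - 2 - 2 * real t * D"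
          proof -
            have "0 < \<epsilon> * ln (real n)" using epos lnpos by simp
            moreover have "2 * (1 - \<epsilon>) * ln (real n) = 2 * ln (real n) - 2 * (\<epsilon> * ln (real n))"
              by (simp add: algebra_simps)
            ultimately show ?thesis using tD by linarith
          qed
          then have "?m ^ t * (\<epsilon> * ln (real n)) \<le> ?m ^ t * (2 * ln (real n) - 2 - 2 * real t * D)"
            using mp by (intro mult_left_mono) auto
          then have "ln (real n) * (\<epsilon> * ?m ^ t) \<le> ln (real n) * L" using main by (simp add: algebra_simps)
          then have "\<epsilon> * ?m ^ t \<le> L" using lnpos by simp
          then show ?thesis unfolding expected_l1_dev_def L_def[symmetric] using mp by (simp add: field_simps)
        qed
      qed
    qed
  qed
qed

end
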